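(* Let $j,k$ be two settings with true effects $\theta^j,\theta^k$, short-regression parameters $\theta^j_s,\theta^k_s$, and omitted variable biases $B^i = \theta^i_s-\theta^i$ satisfying $B^i\in[\nu^i_l,\nu^i_u]$ ($i\in\{j,k\}$, known constants $\nu^i_l\le\nu^i_u$) and $B^j=\rho^{jk}B^k$ with $\rho^{jk}\in[\rho^{jk}_l,\rho^{jk}_u]$, $0<\rho^{jk}_l\le 1\le\rho^{jk}_u$. Let $\mathbb{C}^{jk} = \{(\rho^{jk}_l-1)\nu^k_l, (\rho^{jk}_u-1)\nu^k_l, (\rho^{jk}_l-1)\nu^k_u, (\rho^{jk}_u-1)\nu^k_u\}$, $c^{jk}_l=\min\mathbb{C}^{jk}$, $c^{jk}_u=\max\mathbb{C}^{jk}$, $\mathcal{I}^i = [\theta^i_s-\nu^i_u,\theta^i_s-\nu^i_l]$, $\mathcal{I}^{jk}_D = [(\theta^j_s-\theta^k_s)-c^{jk}_u,(\theta^j_s-\theta^k_s)-c^{jk}_l]$, and $\mathcal{J}^{jk} = \{(\theta^j,\theta^k):\theta^j\in\mathcal{I}^j,\ \theta^k\in\mathcal{I}^k,\ \theta^j-\theta^k\in\mathcal{I}^{jk}_D\}$. Then the projection of $\mathcal{J}^{jk}$ onto the first coordinate is \[ \mathrm{proj}_j(\mathcal{J}^{jk}) = \mathcal{I}^j \cap [\theta^j_s - \nu^k_u - c^{jk}_u,\ \theta^j_s - \nu^k_l - c^{jk}_l]. \] Moreover, $\mathrm{proj}_j(\mathcal{J}^{jk}) \subsetneq \mathcal{I}^j$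 if and only if at least one of the following holds: (1) $\nu^k_u + c^{jk}_u < \nu^j_u$; (2) $\nu^k_l + c^{jk}_l > \nu^j_l$.
   Context: $\mathrm{proj}_j(\mathcal{J}^{jk}) = \{\theta^j : \exists\,\theta^k \text{ with } (\theta^j,\theta^k)\in\mathcal{J}^{jk}\}$. In the setting of the paper, $\theta^i$ is the causal effect in the partially linear model $Y^i=\theta^iD^i+f^i(X^i,A^i)+\varepsilon^i$ with $A^i$ unobserved, and $\theta^i_s$ the parameter from the short regression omitting $A^i$; for the claim only the numerical quantities above matter. *)

theory Defs
  imports Complex_Main
begin

definition Cset :: "real \<Rightarrow> real \<Rightarrow> real \<Rightarrow> real \<Rightarrow> real set" where
  "Cset rl ru nkl nku = {(rl - 1) * nkl, (ru - 1) * nkl, (rl - 1) * nku, (ru - 1) * nku}"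

definition c_l :: "real \<Rightarrow> real \<Rightarrow> real \<Rightarrow> real \<Rightarrow> real" where
  "c_l rl ru nkl nku = Min (Cset rl ru nkl nku)"

definition c_u :: "real \<Rightarrow> real \<Rightarrow> real \<Rightarrow> real \<Rightarrow> real" where
  "c_u rl ru nkl nku = Max (Cset rl ru nkl nku)"

definition I_set :: "real \<Rightarrow> real \<Rightarrow> real \<Rightarrow> real set" where
  "I_set ts nl nu = {ts - nu .. ts - nl}"

definition ID_set :: "real \<Rightarrow> real \<Rightarrow> real \<Rightarrow> real \<Rightarrow> real \<Rightarrow> real \<Rightarrow> real set" where
  "ID_set tjs tks rl ru nkl nku =
     {(tjs - tks) - c_u rl ru nkl nku .. (tjs - tks) - c_l rl ru nkl nku}"

definition J_set :: "real \<Rightarrow> real \<Rightarrow> real \<Rightarrow> real \<Rightarrow> real \<Rightarrow> real \<Rightarrow> real \<Rightarrow> real \<Rightarrow> (real \<times> real) set" where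
  "J_set tjs tks njl nju nkl nku rl ru =
     {(tj, tk). tj \<in> I_set tjs njl nju \<and> tk \<in> I_set tks nkl nku \<and>
                tj - tk \<in> ID_set tjs tks rl ru nkl nku}"

definition proj1 :: "('a \<times> 'b) set \<Rightarrow> 'a set" where
  "proj1 J = {x. \<exists>y. (x, y) \<in> J}"

end

theory Submission
  imports Defs
begin

lemma cl_le_cu: "c_l rl ru nkl nku \<le> c_u rl ru nkl nku"
  unfolding c_l_def c_u_def Cset_def
  by (rule order_trans[OF Min_le Max_ge]) auto

theorem proposition3:
  fixes tjs tks njl nju nkl nku rl ru :: real
  assumes "njl \<le> nju" and "nkl \<le> nku"
    and "0 < rl" and "rl \<le> 1" and "1 \<le> ru"
  shows "proj1 (J_set tjs tks njl nju nkl nku rl ru) =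
           I_set tjs njl nju \<inter>
           {tjs - nku - c_u rl ru nkl nku .. tjs - nkl - c_l rl ru nkl nku} \<and>
         (proj1 (J_set tjs tks njl nju nkl nku rl ru) \<subset> I_set tjs njl nju \<longleftrightarrow>
           (nku + c_u rl ru nkl nku < nju \<or> nkl + c_l rl ru nkl nku > njl))"
proof -
  define cl where "cl = c_l rl ru nkl nku"
  define cu where "cu = c_u rl ru nkl nku"
  have clu: "cl \<le> cu" unfolding cl_def cu_def by (rule cl_le_cu)
  have P: "proj1 (J_set tjs tks njl nju nkl nku rl ru) =
           I_set tjs njl nju \<inter> {tjs - nku - cu .. tjs - nkl - cl}"
  proof (rule set_eqI)
    fix x
    show "x \<in> proj1 (J_set tjs tks njl nju nkl nku rl ru) \<longleftrightarrow>
          x \<in> I_set tjs njl nju \<inter> {tjs - nku - cu .. tjs - nkl - cl}"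
    proof
      assume "x \<in> proj1 (J_set tjs tks njl nju nkl nku rl ru)"
      then obtain y where "(x, y) \<in> J_set tjs tks njl nju nkl nku rl ru"
        unfolding proj1_def by auto
      then show "x \<in> I_set tjs njl nju \<inter> {tjs - nku - cu .. tjs - nkl - cl}"
        unfolding J_set_def I_set_def ID_set_def cl_def[symmetric] cu_def[symmetric]
        by auto
    next
      assume A: "x \<in> I_set tjs njl nju \<inter> {tjs - nku - cu .. tjs - nkl - cl}"
      define y where "y = max (tks - nku) (x - tjs + tks + cl)"
      have a1: "tjs - nju \<le> x" "x \<le> tjs - njl" "tjs - nku - cu \<le> x" "x \<le> tjs - nkl - cl"
        using A unfolding I_set_def by auto
      have "(x, y) \<in> J_set tjs tks njl nju nkl nku rl ru"
        using a1 clu assms(2)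
        unfolding J_set_def I_set_def ID_set_def cl_def[symmetric] cu_def[symmetric] y_def
        by (simp add: max_def)
      then show "x \<in> proj1 (J_set tjs tks njl nju nkl nku rl ru)"
        unfolding proj1_def by auto
    qed
  qed
  have Q: "(I_set tjs njl nju \<inter> {tjs - nku - cu .. tjs - nkl - cl} \<subset> I_set tjs njl nju)
      \<longleftrightarrow> (nku + cu < nju \<or> nkl + cl > njl)"
  proof
    assume "I_set tjs njl nju \<inter> {tjs - nku - cu .. tjs - nkl - cl} \<subset> I_set tjs njl nju"
    then obtain z where "z \<in> I_set tjs njl nju" "z \<notin> {tjs - nku - cu .. tjs - nkl - cl}"
      by blast
    then show "nku + cu < nju \<or> nkl + cl > njl" unfolding I_set_def by auto
  next
    assume H: "nku + cu < nju \<or> nkl + cl > njl"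
    show "I_set tjs njl nju \<inter> {tjs - nku - cu .. tjs - nkl - cl} \<subset> I_set tjs njl nju"
    proof (cases "nku + cu < nju")
      case True
      have "tjs - nju \<in> I_set tjs njl nju" using assms(1) unfolding I_set_def by auto
      moreover have "tjs - nju \<notin> {tjs - nku - cu .. tjs - nkl - cl}" using True by auto
      ultimately show ?thesis by blast
    next
      case False
      then have F: "nkl + cl > njl" using H by auto
      have "tjs - njl \<in> I_set tjs njl nju" using assms(1) unfolding I_set_def by auto
      moreover have "tjs - njl \<notin> {tjs - nku - cu .. tjs - nkl - cl}" using F by auto
      ultimately show ?thesis by blast
    qed
  qed
  show ?thesis using P Q unfolding cl_def cu_def by simp
qed

end
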